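(* Let $q\in\mathbb{N}\setminus\{1\}$ and let $X$ be the geometric armadillo tail with parameter $r=\frac1q$. Then there exists a saddle connection, called $\mathrm{bsc}_2'$, namely the straight-line trajectory of slope $\frac{q}{2q-1}$ starting at the singular point $(1+\frac1q,0)$ (the lower right vertex of $\square_2$): this trajectory reaches the singularity again after finite length without passing through it in between.
   Context: Set $l_k=q^{-(k-1)}$, $s_k=l_1+\dots+l_k$ ($s_0=0$), and $\square_k=[s_{k-1},s_k]\times[0,l_k]\subset\mathbb{R}^2$. The geometric armadillo tail with parameter $\frac1q$ is obtained from $P=\bigcup_k\square_k$ by gluing the top edge of each $\square_k$ to its bottom edge by vertical translation, and for each $k\ge1$ gluing $\{s_k\}\times[l_{k+1},l_k]$ by horizontal translation to $\{0\}\times[l_{k+1},l_k]$; then taking the metric completion, in which all vertices of $P$ become a single wild singularity. Trajectories and slopes are computed in the polygonal representation $P$ with these gluings. A saddle connection is a closed straight-line segment from the singularity to itself with no singular point in its interior. *)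

theory Defs
  imports "HOL-Analysis.Analysis"
begin

text \<open>Geometric armadillo tail with parameter 1/q, polygonal representation P in R^2
  (points are pairs (x,y)).  Indices k start at 1.\<close>

definition ell :: "nat \<Rightarrow> nat \<Rightarrow> real" where
  "ell q k = 1 / (real q) ^ (k - 1)"

definition spos :: "nat \<Rightarrow> nat \<Rightarrow> real" where
  "spos q k = (\<Sum>i\<in>{1..k}. ell q i)"

definition square :: "nat \<Rightarrow> nat \<Rightarrow> (real \<times> real) set" where
  "square q k = {spos q (k - 1) .. spos q k} \<times> {0 .. ell q k}"

definition polyP :: "nat \<Rightarrow> (real \<times> real) set" where
  "polyP q = (\<Union>k\<in>{1..}. square q k)"

text \<open>Vertices of P; all of them are the (single) singular point of the surface.\<close>
definition vertices :: "nat \<Rightarrow> (real \<times> real) set" where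
  "vertices q = (\<Union>k\<in>{1..}.
     {(spos q (k - 1), 0), (spos q k, 0), (spos q (k - 1), ell q k), (spos q k, ell q k),
      (spos q k, ell q (Suc k)), (0, ell q k)})"

text \<open>Edge gluings (on non-vertex edge points): top/bottom of each square by vertical
  translation, and the right edge piece {s_k} x (l_(k+1), l_k) with {0} x (l_(k+1), l_k)
  by horizontal translation.  glued q a b: the point a of the boundary is identified with b.\<close>
definition glued :: "nat \<Rightarrow> real \<times> real \<Rightarrow> real \<times> real \<Rightarrow> bool" where
  "glued q a b \<longleftrightarrow> (\<exists>k\<ge>1.
     (snd a = ell q k \<and> spos q (k - 1) < fst a \<and> fst a < spos q k \<and> b = (fst a, 0)) \<or>
     (snd a = 0 \<and> spos q (k - 1) < fst a \<and> fst a < spos q k \<and> b = (fst a, ell q k)) \<or>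
     (fst a = spos q k \<and> ell q (Suc k) < snd a \<and> snd a < ell q k \<and> b = (0, snd a)) \<or>
     (fst a = 0 \<and> ell q (Suc k) < snd a \<and> snd a < ell q k \<and> b = (spos q k, snd a)))"

text \<open>A saddle connection starting at the singular point p (a vertex of P) in direction v:
  a finite chain of straight segments [a_i, b_i], b_i = a_i + t_i v with t_i > 0, whose
  relative interiors lie in the interior of P (hence contain no singular point), where each
  non-final endpoint b_i is a non-vertex boundary point glued to the next starting point a_(i+1),
  and the final endpoint b_n is a vertex, i.e. the singularity.\<close>
definition saddle_connection_from :: "nat \<Rightarrow> real \<times> real \<Rightarrow> real \<times> real \<Rightarrow> bool" where
  "saddle_connection_from q p v \<longleftrightarrow> p \<in> vertices q \<and>
     (\<exists>(n::nat) (a::nat \<Rightarrow> real \<times> real) (b::nat \<Rightarrow> real \<times> real) (t::nat \<Rightarrow> real).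
        a 0 = p \<and>
        (\<forall>i\<le>n. 0 < t i \<and> b i = a i + t i *\<^sub>R v \<and> a i \<in> polyP q \<and> b i \<in> polyP q \<and>
                 open_segment (a i) (b i) \<subseteq> interior (polyP q)) \<and>
        (\<forall>i<n. glued q (b i) (a (Suc i))) \<and>
        b n \<in> vertices q)"

end

theory Submission
  imports Defs
begin

lemma ell_simps: "ell q (Suc 0) = 1" "ell q 1 = 1" "ell q 2 = 1/real q" "ell q 3 = 1/(real q)^2" "ell q 4 = 1/(real q)^3"
  by (simp_all add: ell_def)
lemma ell_Suc: "ell q (Suc k) = 1/(real q)^k" by (simp add: ell_def)
lemma spos_simps: "spos q 0 = 0" "spos q (Suc 0) = 1" "spos q 1 = 1" "spos q 2 = 1 + 1/real q" "spos q 3 = 1 + 1/real q + 1/(real q)^2"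
  by (simp_all add: spos_def ell_def numeral_3_eq_3 numeral_2_eq_2 atLeastAtMostSuc_conv)
lemma sq_open:
  fixes xl xr yl yr :: real
  assumes "xl \<le> fst a" "fst a \<le> xr" "xl \<le> fst b" "fst b \<le> xr"
    "xl < fst a \<or> xl < fst b" "fst a < xr \<or> fst b < xr"
    "yl \<le> snd a" "snd a \<le> yr" "yl \<le> snd b" "snd b \<le> yr"
    "yl < snd a \<or> yl < snd b" "snd a < yr \<or> snd b < yr"
  shows "open_segment a b \<subseteq> {xl<..<xr} \<times> {yl<..<yr}"
proof
  fix z assume "z \<in> open_segment a b"
  then obtain u where u: "0 < u" "u < 1" "z = (1-u) *\<^sub>R a + u *\<^sub>R b"
    by (auto simp: in_segment)
  have h: "\<And>p c d :: real. p \<le> c \<Longrightarrow> p \<le> d \<Longrightarrow> p < c \<or> p < d \<Longrightarrow> p < (1-u)*c + u*d"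
  proof -
    fix p c d :: real assume "p \<le> c" "p \<le> d" "p < c \<or> p < d"
    moreover have "(1-u)*c + u*d - p = (1-u)*(c-p) + u*(d-p)" by algebra
    moreover have "0 \<le> (1-u)*(c-p)" "0 \<le> u*(d-p)" using u(1,2) \<open>p \<le> c\<close> \<open>p \<le> d\<close> by simp_all
    moreover have "0 < (1-u)*(c-p) \<or> 0 < u*(d-p)" using u(1,2) \<open>p < c \<or> p < d\<close> by auto
    ultimately show "p < (1-u)*c + u*d" by linarith
  qed
  have h2: "\<And>p c d :: real. c \<le> p \<Longrightarrow> d \<le> p \<Longrightarrow> c < p \<or> d < p \<Longrightarrow> (1-u)*c + u*d < p"
  proof -
    fix p c d :: real assume "c \<le> p" "d \<le> p" "c < p \<or> d < p"
    moreover have "p - ((1-u)*c + u*d) = (1-u)*(p-c) + u*(p-d)" by algebra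
    moreover have "0 \<le> (1-u)*(p-c)" "0 \<le> u*(p-d)" using u(1,2) \<open>c \<le> p\<close> \<open>d \<le> p\<close> by simp_all
    moreover have "0 < (1-u)*(p-c) \<or> 0 < u*(p-d)" using u(1,2) \<open>c < p \<or> d < p\<close> by auto
    ultimately show "(1-u)*c + u*d < p" by linarith
  qed
  show "z \<in> {xl<..<xr} \<times> {yl<..<yr}"
    using u(3) h[OF assms(1,3,5)] h2[OF assms(2,4,6)] h[OF assms(7,9,11)] h2[OF assms(8,10,12)]
    by (auto simp: mem_Times_iff)
qed
lemma sq_sub: "k \<ge> 1 \<Longrightarrow> square q k \<subseteq> polyP q" by (auto simp: polyP_def)

lemma int_sub: "open S \<Longrightarrow> S \<subseteq> polyP q \<Longrightarrow> S \<subseteq> interior (polyP q)"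
  by (rule interior_maximal)

lemma sq1: "square q 1 = {0..1} \<times> {0..1}" by (simp add: square_def spos_simps ell_simps)
lemma sq2: "square q 2 = {1..1 + 1/real q} \<times> {0..1/real q}" by (simp add: square_def spos_simps ell_simps)
lemma sq3: "square q 3 = {1 + 1/real q..1 + 1/real q + 1/(real q)^2} \<times> {0..1/(real q)^2}"
  by (simp add: square_def spos_simps ell_simps)

lemma in1: "p \<in> {0..1} \<times> {0..1} \<Longrightarrow> p \<in> polyP q"
  using sq_sub[of 1 q] sq1 by auto
lemma in2: "p \<in> {1..1 + 1/real q} \<times> {0..1/real q} \<Longrightarrow> p \<in> polyP q"
  using sq_sub[of 2 q] sq2 by auto
lemma in3: "p \<in> {1 + 1/real q..1 + 1/real q + 1/(real q)^2} \<times> {0..1/(real q)^2} \<Longrightarrow> p \<in> polyP q"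
  using sq_sub[of 3 q] sq3 by auto

lemma in1': "0 \<le> x \<Longrightarrow> x \<le> 1 \<Longrightarrow> 0 \<le> y \<Longrightarrow> y \<le> 1 \<Longrightarrow> (x, y) \<in> polyP q"
  by (rule in1) auto
lemma in2': "1 \<le> x \<Longrightarrow> x \<le> 1 + 1/real q \<Longrightarrow> 0 \<le> y \<Longrightarrow> y \<le> 1/real q \<Longrightarrow> (x, y) \<in> polyP q"
  by (rule in2) auto

lemma int1: "{0<..<1} \<times> {0<..<1} \<subseteq> interior (polyP q)"
  by (rule int_sub) (auto simp: open_Times intro!: in1)
lemma int3: "{1 + 1/real q<..<1 + 1/real q + 1/(real q)^2} \<times> {0<..<1/(real q)^2} \<subseteq> interior (polyP q)"
  by (rule int_sub) (auto simp: open_Times intro!: in3)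
lemma int12: assumes "q \<ge> 2" shows "{0<..<1 + 1/real q} \<times> {0<..<1/real q} \<subseteq> interior (polyP q)"
proof (rule int_sub)
  show "open ({0<..<1 + 1/real q} \<times> {0<..<1/real q})" by (simp add: open_Times)
  have "1/real q \<le> 1" using assms by simp
  show "{0<..<1 + 1/real q} \<times> {0<..<1/real q} \<subseteq> polyP q"
  proof
    fix p assume p: "p \<in> {0<..<1 + 1/real q} \<times> {0<..<1/real q}"
    show "p \<in> polyP q"
    proof (cases "fst p \<le> 1")
      case True then show ?thesis using p \<open>1/real q \<le> 1\<close> by (intro in1) (auto simp: mem_Times_iff)
    next
      case False then show ?thesis using p by (intro in2) (auto simp: mem_Times_iff)
    qed
  qed
qed
lemma e1: "(E::real) \<noteq> 0 \<Longrightarrow> Q \<noteq> 0 \<Longrightarrow> (1::real, (j + Q^2)/(Q * E)) = (0, j/(Q * E)) + (1/E) *\<^sub>R (E, Q)"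
  by (simp add: field_simps power2_eq_square)
lemma e2: "(E::real) \<noteq> 0 \<Longrightarrow> Q \<noteq> 0 \<Longrightarrow> E = 2*Q-1 \<Longrightarrow> ((Q^2 - Q - j)/Q^2, 1::real) = (0, (j + Q^2)/(Q * E)) + ((Q^2 - Q - j)/(Q^2 * E)) *\<^sub>R (E, Q)"
proof -
  assume a: "E \<noteq> 0" "Q \<noteq> 0" "E = 2*Q-1"
  have h: "E * (Q * (Q * Q)) + E * (E * (Q * (Q * Q))) = E * (Q * (Q * (Q * (Q * 2))))"
  proof -
    have "E * (Q * (Q * Q)) + E * (E * (Q * (Q * Q))) = E * (Q * (Q * Q)) * (E + 1)" by algebra
    also have "E + 1 = Q * 2" using a by simp
    finally show ?thesis by (simp add: algebra_simps)
  qed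
  show ?thesis using a(1,2) h by (simp add: field_simps power2_eq_square)
qed
lemma e3: "(E::real) \<noteq> 0 \<Longrightarrow> Q \<noteq> 0 \<Longrightarrow> E = 2*Q-1 \<Longrightarrow> (1 + (Q - 1 - j)/Q^2, 1/Q) = ((Q^2 - Q - j)/Q^2, 0) + (1/Q^2) *\<^sub>R (E, Q)"
  by (simp add: field_simps power2_eq_square)
lemma e4: "(E::real) \<noteq> 0 \<Longrightarrow> Q \<noteq> 0 \<Longrightarrow> (1 + 1/Q, (j + 1)/(Q * E)) = (1 + (Q - 1 - j)/Q^2, 0) + ((j + 1)/(Q^2 * E)) *\<^sub>R (E, Q)"
  by (simp add: field_simps power2_eq_square)
lemma e0: "(E::real) \<noteq> 0 \<Longrightarrow> Q \<noteq> 0 \<Longrightarrow> (1 + 1/Q + 1/Q^2, 1/(Q * E)) = (1 + 1/Q, 0) + (1/(Q^2 * E)) *\<^sub>R (E, Q)"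
  by (simp add: field_simps power2_eq_square)

definition seg_ok :: "nat \<Rightarrow> real \<times> real \<Rightarrow> real \<times> real \<Rightarrow> real \<Rightarrow> bool" where
  "seg_ok q a b t \<longleftrightarrow> 0 < t \<and> b = a + t *\<^sub>R (2 * real q - 1, real q) \<and> a \<in> polyP q \<and> b \<in> polyP q \<and>
     open_segment a b \<subseteq> interior (polyP q)"

lemma seg0: assumes "q \<ge> 2"
  shows "seg_ok q (1 + 1/real q, 0) (1 + 1/real q + 1/(real q)^2, 1/(real q * (2*real q - 1))) (1/((real q)^2 * (2*real q - 1)))"
proof -
  define Q where "Q = real q"
  have Q: "Q \<ge> 2" using assms Q_def by simp
  have le: "1/(Q * (2*Q - 1)) \<le> 1/Q^2" using Q by (simp add: field_simps power2_eq_square)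
  have pos: "0 < 1/(Q * (2*Q - 1))" using Q by simp
  have "open_segment (1 + 1/Q, 0) (1 + 1/Q + 1/Q^2, 1/(Q * (2*Q - 1))) \<subseteq>
     {1 + 1/Q<..<1 + 1/Q + 1/Q^2} \<times> {0<..<1/Q^2}"
    by (rule sq_open) (use Q le pos in auto)
  also have "\<dots> \<subseteq> interior (polyP q)" using int3[of q] Q_def by simp
  finally show ?thesis unfolding seg_ok_def Q_def[symmetric] using Q le pos
    by (auto intro!: in3 simp: Q_def[symmetric] field_simps power2_eq_square)
qed

lemma seg1: assumes "q \<ge> 2" "1 \<le> j" "j \<le> real q - 1"
  shows "seg_ok q (0, j/(real q * (2*real q - 1))) (1, (j + (real q)^2)/(real q * (2*real q - 1))) (1/(2*real q - 1))"
proof -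
  define Q where "Q = real q"
  have Q: "Q \<ge> 2" using assms Q_def by simp
  have j: "1 \<le> j" "j \<le> Q - 1" using assms Q_def by auto
  have QD: "0 < Q * (2*Q - 1)" using Q by simp
  have D: "0 < 2*Q - 1" "0 < Q" using Q by auto
  have QQ: "2*Q \<le> Q*Q" using mult_right_mono[of 2 Q Q] Q by simp
  have le: "(j + Q^2)/(Q * (2*Q - 1)) < 1"
  proof -
    have "Q * (2*Q - 1) = 2*(Q*Q) - Q" "Q^2 = Q*Q" by (simp_all add: algebra_simps power2_eq_square)
    then have "j + Q^2 < Q * (2*Q - 1)" using j Q QQ by linarith
    then show ?thesis using QD by simp
  qed
  have pos: "0 < j/(Q * (2*Q - 1))" using QD j by simp
  have "0 < j + Q^2" using j by (simp add: add_pos_nonneg)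
  then have pos2: "0 < (j + Q^2)/(Q * (2*Q - 1))" using QD by simp
  have "j < j + Q^2" using Q by simp
  then have mono: "j/(Q * (2*Q - 1)) < (j + Q^2)/(Q * (2*Q - 1))" using QD by (simp add: divide_strict_right_mono)
  have "open_segment (0::real, j/(Q * (2*Q - 1))) (1, (j + Q^2)/(Q * (2*Q - 1))) \<subseteq> {0<..<1} \<times> {0<..<1}"
    using le pos pos2 mono by (intro sq_open; simp only: fst_conv snd_conv; linarith)
  also have "\<dots> \<subseteq> interior (polyP q)" using int1[of q] by simp
  finally have os: "open_segment (0::real, j/(Q * (2*Q - 1))) (1, (j + Q^2)/(Q * (2*Q - 1))) \<subseteq> interior (polyP q)" .
  have eq: "(1::real, (j + Q^2)/(Q * (2*Q - 1))) = (0, j/(Q * (2*Q - 1))) + (1/(2*Q - 1)) *\<^sub>R (2*Q - 1, Q)"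
    by (rule e1) (use D in auto)
  have t: "0 < 1/(2*Q-1)" using D by simp
  have ina: "(0, j/(Q * (2*Q - 1))) \<in> polyP q" by (rule in1') (use pos le mono in linarith)+
  have inb: "(1, (j + Q^2)/(Q * (2*Q - 1))) \<in> polyP q" by (rule in1') (use pos2 le in linarith)+
  show ?thesis unfolding seg_ok_def Q_def[symmetric]
    by (intro conjI eq os t ina inb)
qed

lemma seg2: assumes "q \<ge> 2" "1 \<le> j" "j \<le> real q - 1"
  shows "seg_ok q (0, (j + (real q)^2)/(real q * (2*real q - 1))) (((real q)^2 - real q - j)/(real q)^2, 1)
     (((real q)^2 - real q - j)/((real q)^2 * (2*real q - 1)))"
proof -
  define Q where "Q = real q"
  have Q: "Q \<ge> 2" using assms Q_def by simp
  have j: "1 \<le> j" "j \<le> Q - 1" using assms Q_def by auto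
  have QD: "0 < Q * (2*Q - 1)" using Q by simp
  have D: "0 < 2*Q - 1" "0 < Q" "0 < Q^2" using Q by auto
  have QQ: "2*Q \<le> Q*Q" using mult_right_mono[of 2 Q Q] Q by simp
  have le: "(j + Q^2)/(Q * (2*Q - 1)) < 1"
  proof -
    have "Q * (2*Q - 1) = 2*(Q*Q) - Q" "Q^2 = Q*Q" by (simp_all add: algebra_simps power2_eq_square)
    then have "j + Q^2 < Q * (2*Q - 1)" using j Q QQ by linarith
    then show ?thesis using QD by simp
  qed
  have "0 < j + Q^2" using j by (simp add: add_pos_nonneg)
  then have pos2: "0 < (j + Q^2)/(Q * (2*Q - 1))" using QD by simp
  have "Q^2 = Q*Q" by (simp add: power2_eq_square)
  then have num: "0 < Q^2 - Q - j" "Q^2 - Q - j < Q^2" using QQ j Q by linarith+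
  have x1: "0 < (Q^2 - Q - j)/Q^2" "(Q^2 - Q - j)/Q^2 < 1" using num D by simp_all
  have tpos: "0 < (Q^2 - Q - j)/(Q^2 * (2*Q - 1))" using num D by simp
  have "open_segment (0::real, (j + Q^2)/(Q * (2*Q - 1))) ((Q^2 - Q - j)/Q^2, 1) \<subseteq> {0<..<1} \<times> {0<..<1}"
    by (rule sq_open) (use le pos2 x1 in auto)
  also have "\<dots> \<subseteq> interior (polyP q)" using int1[of q] by simp
  finally have os: "open_segment (0::real, (j + Q^2)/(Q * (2*Q - 1))) ((Q^2 - Q - j)/Q^2, 1) \<subseteq> interior (polyP q)" .
  have eq: "((Q^2 - Q - j)/Q^2, 1::real) = (0, (j + Q^2)/(Q * (2*Q - 1))) + ((Q^2 - Q - j)/(Q^2 * (2*Q - 1))) *\<^sub>R (2*Q - 1, Q)"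
    by (rule e2) (use D in auto)
  show ?thesis unfolding seg_ok_def Q_def[symmetric]
    by (intro conjI eq os tpos) (use D le pos2 x1 in \<open>auto intro!: in1\<close>)
qed

lemma seg3: assumes "q \<ge> 2" "1 \<le> j" "j \<le> real q - 1"
  shows "seg_ok q (((real q)^2 - real q - j)/(real q)^2, 0) (1 + (real q - 1 - j)/(real q)^2, 1/real q)
     (1/(real q)^2)"
proof -
  define Q where "Q = real q"
  have Q: "Q \<ge> 2" using assms Q_def by simp
  have j: "1 \<le> j" "j \<le> Q - 1" using assms Q_def by auto
  have D: "0 < 2*Q - 1" "0 < Q" "0 < Q^2" using Q by auto
  have QQ: "2*Q \<le> Q*Q" using mult_right_mono[of 2 Q Q] Q by simp
  have "Q^2 = Q*Q" by (simp add: power2_eq_square)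
  then have num: "0 < Q^2 - Q - j" "Q^2 - Q - j < Q^2" using QQ j Q by linarith+
  have x1: "0 < (Q^2 - Q - j)/Q^2" "(Q^2 - Q - j)/Q^2 < 1" using num D by simp_all
  have "0 \<le> (Q - 1 - j)/Q^2" using j D by simp
  moreover have "(Q - 1 - j)/Q^2 < Q/Q^2" using j D by (simp add: divide_strict_right_mono)
  moreover have "Q/Q^2 = 1/Q" using D by (simp add: power2_eq_square)
  ultimately have x2: "1 \<le> 1 + (Q - 1 - j)/Q^2" "1 + (Q - 1 - j)/Q^2 < 1 + 1/Q" by simp_all
  have y: "0 < 1/Q" "1/Q \<le> 1" using Q by simp_all
  have "open_segment ((Q^2 - Q - j)/Q^2, 0) (1 + (Q - 1 - j)/Q^2, 1/Q) \<subseteq> {0<..<1 + 1/Q} \<times> {0<..<1/Q}"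
    using x1 x2 y by (intro sq_open; simp only: fst_conv snd_conv; linarith)
  also have "\<dots> \<subseteq> interior (polyP q)" using int12[of q] assms Q_def by simp
  finally have os: "open_segment ((Q^2 - Q - j)/Q^2, 0) (1 + (Q - 1 - j)/Q^2, 1/Q) \<subseteq> interior (polyP q)" .
  have eq: "(1 + (Q - 1 - j)/Q^2, 1/Q) = ((Q^2 - Q - j)/Q^2, 0) + (1/Q^2) *\<^sub>R (2*Q - 1, Q)"
    by (rule e3) (use D in auto)
  have ina: "((Q^2 - Q - j)/Q^2, 0) \<in> polyP q" by (rule in1) (use x1 in auto)
  have inb: "(1 + (Q - 1 - j)/Q^2, 1/Q) \<in> polyP q" by (rule in2) (use x2 y in \<open>auto simp: Q_def\<close>)
  show ?thesis unfolding seg_ok_def Q_def[symmetric]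
    by (intro conjI eq os ina inb) (use D in auto)
qed

lemma seg4: assumes "q \<ge> 2" "1 \<le> j" "j \<le> real q - 1"
  shows "seg_ok q (1 + (real q - 1 - j)/(real q)^2, 0) (1 + 1/real q, (j + 1)/(real q * (2*real q - 1)))
     ((j + 1)/((real q)^2 * (2*real q - 1)))"
proof -
  define Q where "Q = real q"
  have Q: "Q \<ge> 2" using assms Q_def by simp
  have j: "1 \<le> j" "j \<le> Q - 1" using assms Q_def by auto
  have D: "0 < 2*Q - 1" "0 < Q" "0 < Q^2" using Q by auto
  have QD: "0 < Q * (2*Q - 1)" using Q by simp
  have "0 \<le> (Q - 1 - j)/Q^2" using j D by simp
  moreover have "(Q - 1 - j)/Q^2 < Q/Q^2" using j D by (simp add: divide_strict_right_mono)
  moreover have "Q/Q^2 = 1/Q" using D by (simp add: power2_eq_square)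
  ultimately have x2: "1 \<le> 1 + (Q - 1 - j)/Q^2" "1 + (Q - 1 - j)/Q^2 < 1 + 1/Q" by simp_all
  have y: "0 < 1/Q" "1/Q \<le> 1" using Q by simp_all
  have "(j + 1)/(Q * (2*Q - 1)) < (2*Q - 1)/(Q * (2*Q - 1))" using j QD Q by (intro divide_strict_right_mono) auto
  also have "(2*Q - 1)/(Q * (2*Q - 1)) = 1/Q" using D by simp
  finally have yb: "(j + 1)/(Q * (2*Q - 1)) < 1/Q" .
  have yb0: "0 < (j + 1)/(Q * (2*Q - 1))" using j QD by simp
  have tpos: "0 < (j + 1)/(Q^2 * (2*Q - 1))" using j D by simp
  have "open_segment (1 + (Q - 1 - j)/Q^2, 0) (1 + 1/Q, (j + 1)/(Q * (2*Q - 1))) \<subseteq> {0<..<1 + 1/Q} \<times> {0<..<1/Q}"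
    by (rule sq_open) (use x2 y yb yb0 in auto)
  also have "\<dots> \<subseteq> interior (polyP q)" using int12[of q] assms Q_def by simp
  finally have os: "open_segment (1 + (Q - 1 - j)/Q^2, 0) (1 + 1/Q, (j + 1)/(Q * (2*Q - 1))) \<subseteq> interior (polyP q)" .
  have eq: "(1 + 1/Q, (j + 1)/(Q * (2*Q - 1))) = (1 + (Q - 1 - j)/Q^2, 0) + ((j + 1)/(Q^2 * (2*Q - 1))) *\<^sub>R (2*Q - 1, Q)"
    by (rule e4) (use D in auto)
  show ?thesis unfolding seg_ok_def Q_def[symmetric]
    by (intro conjI eq os tpos) (use D x2 y yb yb0 in \<open>auto intro!: in2 simp: Q_def\<close>)
qed


lemma G0: assumes "q \<ge> 2"
  shows "glued q (1 + 1/real q + 1/(real q)^2, 1/(real q * (2*real q - 1))) (0, 1/(real q * (2*real q - 1)))"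
proof -
  define Q where "Q = real q"
  have Q: "Q \<ge> 2" using assms Q_def by simp
  have QQ: "2*Q \<le> Q*Q" using mult_right_mono[of 2 Q Q] Q by simp
  have D: "0 < 2*Q - 1" "0 < Q" using Q by auto
  have "1/Q^3 < 1/(Q * (2*Q - 1))"
  proof (rule divide_strict_left_mono)
    have "Q*(2*Q) \<le> Q*(Q*Q)" using QQ D by (intro mult_left_mono) auto
    moreover have "Q * (2*Q - 1) = Q*(2*Q) - Q" "Q^3 = Q*(Q*Q)" by (simp_all add: algebra_simps power3_eq_cube)
    ultimately show "Q * (2*Q - 1) < Q^3" using D by linarith
  qed (use D in auto)
  moreover have "1/(Q * (2*Q - 1)) < 1/Q^2"
  proof (rule divide_strict_left_mono)
    show "Q^2 < Q * (2*Q - 1)" using Q D by (simp add: power2_eq_square algebra_simps)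
  qed (use D in auto)
  ultimately show ?thesis unfolding glued_def
    by (intro exI[of _ 3]) (simp add: ell_simps spos_simps ell_Suc Q_def)
qed

lemma G1: assumes "q \<ge> 2" "1 \<le> j" "j \<le> real q - 1"
  shows "glued q (1, (j + (real q)^2)/(real q * (2*real q - 1))) (0, (j + (real q)^2)/(real q * (2*real q - 1)))"
proof -
  define Q where "Q = real q"
  have Q: "Q \<ge> 2" using assms Q_def by simp
  have j: "1 \<le> j" "j \<le> Q - 1" using assms Q_def by auto
  have QQ: "2*Q \<le> Q*Q" using mult_right_mono[of 2 Q Q] Q by simp
  have D: "0 < 2*Q - 1" "0 < Q" using Q by auto
  have QD: "0 < Q * (2*Q - 1)" using Q by simp
  have "(j + Q^2)/(Q * (2*Q - 1)) < 1"
  proof -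
    have "Q * (2*Q - 1) = 2*(Q*Q) - Q" "Q^2 = Q*Q" by (simp_all add: algebra_simps power2_eq_square)
    then have "j + Q^2 < Q * (2*Q - 1)" using j Q QQ by linarith
    then show ?thesis using QD by simp
  qed
  moreover have "1/Q < (j + Q^2)/(Q * (2*Q - 1))"
  proof -
    have "1/Q = (2*Q - 1)/(Q * (2*Q - 1))" using D by simp
    also have "\<dots> < (j + Q^2)/(Q * (2*Q - 1))"
    proof (rule divide_strict_right_mono)
      have "Q^2 = Q*Q" by (simp add: power2_eq_square)
      then show "2*Q - 1 < j + Q^2" using QQ j by linarith
    qed (use QD in auto)
    finally show ?thesis .
  qed
  ultimately show ?thesis unfolding glued_def
    by (intro exI[of _ 1]) (simp add: ell_simps spos_simps ell_Suc Q_def)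
qed

lemma G2: assumes "q \<ge> 2" "1 \<le> j" "j \<le> real q - 1"
  shows "glued q (((real q)^2 - real q - j)/(real q)^2, 1) (((real q)^2 - real q - j)/(real q)^2, 0)"
proof -
  define Q where "Q = real q"
  have Q: "Q \<ge> 2" using assms Q_def by simp
  have j: "1 \<le> j" "j \<le> Q - 1" using assms Q_def by auto
  have QQ: "2*Q \<le> Q*Q" using mult_right_mono[of 2 Q Q] Q by simp
  have D: "0 < Q^2" using Q by auto
  have "Q^2 = Q*Q" by (simp add: power2_eq_square)
  then have num: "0 < Q^2 - Q - j" "Q^2 - Q - j < Q^2" using QQ j Q by linarith+
  have x1: "0 < (Q^2 - Q - j)/Q^2" "(Q^2 - Q - j)/Q^2 < 1" using num D by simp_all
  show ?thesis unfolding glued_def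
    by (rule exI[of _ 1]) (use x1 in \<open>simp add: ell_simps spos_simps ell_Suc Q_def\<close>)
qed

lemma G3: assumes "q \<ge> 2" "1 \<le> j" "j \<le> real q - 2"
  shows "glued q (1 + (real q - 1 - j)/(real q)^2, 1/real q) (1 + (real q - 1 - j)/(real q)^2, 0)"
proof -
  define Q where "Q = real q"
  have Q: "Q \<ge> 2" using assms Q_def by simp
  have j: "1 \<le> j" "j \<le> Q - 2" using assms Q_def by auto
  have D: "0 < Q" "0 < Q^2" using Q by auto
  have "0 < (Q - 1 - j)/Q^2" using j D by simp
  moreover have "(Q - 1 - j)/Q^2 < Q/Q^2" using j D by (simp add: divide_strict_right_mono)
  moreover have "Q/Q^2 = 1/Q" using D by (simp add: power2_eq_square)
  ultimately have x2: "1 < 1 + (Q - 1 - j)/Q^2" "1 + (Q - 1 - j)/Q^2 < 1 + 1/Q" by simp_all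
  show ?thesis unfolding glued_def
    by (rule exI[of _ 2]) (use x2 in \<open>simp add: ell_simps spos_simps ell_Suc Q_def\<close>)
qed

lemma G4: assumes "q \<ge> 2" "1 \<le> j" "j \<le> real q - 1"
  shows "glued q (1 + 1/real q, (j + 1)/(real q * (2*real q - 1))) (0, (j + 1)/(real q * (2*real q - 1)))"
proof -
  define Q where "Q = real q"
  have Q: "Q \<ge> 2" using assms Q_def by simp
  have j: "1 \<le> j" "j \<le> Q - 1" using assms Q_def by auto
  have D: "0 < 2*Q - 1" "0 < Q" "0 < Q^2" using Q by auto
  have QD: "0 < Q * (2*Q - 1)" using Q by simp
  have "(j + 1)/(Q * (2*Q - 1)) < (2*Q - 1)/(Q * (2*Q - 1))" using j QD Q by (intro divide_strict_right_mono) auto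
  also have "(2*Q - 1)/(Q * (2*Q - 1)) = 1/Q" using D by simp
  finally have yb: "(j + 1)/(Q * (2*Q - 1)) < 1/Q" .
  have "1/Q^2 = (2*Q - 1)/(Q^2 * (2*Q - 1))" using D by simp
  also have "\<dots> < (j + 1) * Q/(Q^2 * (2*Q - 1))"
  proof (rule divide_strict_right_mono)
    have "2*Q \<le> (j+1)*Q" using j D by (intro mult_right_mono) auto
    then show "2*Q - 1 < (j + 1) * Q" by linarith
  qed (use D in auto)
  also have "\<dots> = (j + 1)/(Q * (2*Q - 1))" using D by (simp add: power2_eq_square)
  finally have ya: "1/Q^2 < (j + 1)/(Q * (2*Q - 1))" .
  show ?thesis unfolding glued_def
    by (rule exI[of _ 2]) (use ya yb in \<open>simp add: ell_simps spos_simps ell_Suc Q_def\<close>)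
qed


definition segA :: "real \<Rightarrow> real \<Rightarrow> nat \<Rightarrow> real \<times> real" where
  "segA Q j r = (if r = 0 then (0, j/(Q * (2*Q - 1))) else if r = 1 then (0, (j + Q^2)/(Q * (2*Q - 1)))
     else if r = 2 then ((Q^2 - Q - j)/Q^2, 0) else (1 + (Q - 1 - j)/Q^2, 0))"
definition segB :: "real \<Rightarrow> real \<Rightarrow> nat \<Rightarrow> real \<times> real" where
  "segB Q j r = (if r = 0 then (1, (j + Q^2)/(Q * (2*Q - 1))) else if r = 1 then ((Q^2 - Q - j)/Q^2, 1)
     else if r = 2 then (1 + (Q - 1 - j)/Q^2, 1/Q) else (1 + 1/Q, (j + 1)/(Q * (2*Q - 1))))"
definition segT :: "real \<Rightarrow> real \<Rightarrow> nat \<Rightarrow> real" where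
  "segT Q j r = (if r = 0 then 1/(2*Q - 1) else if r = 1 then (Q^2 - Q - j)/(Q^2 * (2*Q - 1))
     else if r = 2 then 1/Q^2 else (j + 1)/(Q^2 * (2*Q - 1)))"

lemma segall: assumes "q \<ge> 2" "1 \<le> j" "j \<le> real q - 1" "r < 4"
  shows "seg_ok q (segA (real q) j r) (segB (real q) j r) (segT (real q) j r)"
proof -
  have "r = 0 \<or> r = 1 \<or> r = 2 \<or> r = 3" using assms(4) by auto
  then show ?thesis
    using seg1[OF assms(1-3)] seg2[OF assms(1-3)] seg3[OF assms(1-3)] seg4[OF assms(1-3)]
    unfolding segA_def segB_def segT_def by auto
qed

lemma glue_in: assumes "q \<ge> 2" "1 \<le> j" "j \<le> real q - 1" "r < 3" "r = 2 \<Longrightarrow> j \<le> real q - 2"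
  shows "glued q (segB (real q) j r) (segA (real q) j (Suc r))"
proof -
  have "r = 0 \<or> r = 1 \<or> r = 2" using assms(4) by auto
  then show ?thesis
  proof (elim disjE)
    assume "r = 2" then show ?thesis using G3[OF assms(1,2) assms(5)] unfolding segA_def segB_def by simp
  qed (use G1[OF assms(1-3)] G2[OF assms(1-3)] in \<open>auto simp: segA_def segB_def\<close>)
qed

lemma glue_out: assumes "q \<ge> 2" "1 \<le> j" "j \<le> real q - 1"
  shows "glued q (segB (real q) j 3) (segA (real q) (j + 1) 0)"
  using G4[OF assms] unfolding segA_def segB_def by simp

lemma idx: "r < 4 \<Longrightarrow> (4*m + r) div 4 = m \<and> (4*m + r) mod 4 = (r::nat)"
  by auto

theorem lemma3p1:
  fixes q :: nat
  assumes "q \<ge> 2"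
  shows "saddle_connection_from q (1 + 1 / real q, 0) (2 * real q - 1, real q)"
proof -
  define Q where "Q = real q"
  have Q: "Q \<ge> 2" using assms Q_def by simp
  define J where "J = (\<lambda>i::nat. real ((i - 1) div 4) + 1)"
  define R where "R = (\<lambda>i::nat. (i - 1) mod 4)"
  define a where "a = (\<lambda>i. if i = 0 then (1 + 1/Q, 0) else segA Q (J i) (R i))"
  define b where "b = (\<lambda>i. if i = 0 then (1 + 1/Q + 1/Q^2, 1/(Q * (2*Q - 1))) else segB Q (J i) (R i))"
  define t where "t = (\<lambda>i. if i = 0 then 1/(Q^2 * (2*Q - 1)) else segT Q (J i) (R i))"
  define n where "n = 4 * q - 5"
  have vstart: "(1 + 1 / real q, 0) \<in> vertices q"
  proof -
    have "(spos q (3 - 1), 0) \<in> vertices q" unfolding vertices_def by (intro UN_I[of 3]) auto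
    then show ?thesis by (simp add: spos_simps)
  qed
  have vend: "(1, 1 / real q) \<in> vertices q"
  proof -
    have "(spos q 1, ell q (Suc 1)) \<in> vertices q" unfolding vertices_def by (intro UN_I[of 1]) auto
    then show ?thesis by (simp add: spos_simps ell_Suc)
  qed
  have JR: "J i \<ge> 1" "R i < 4" for i unfolding J_def R_def by auto
  have Jle: "J i \<le> Q - 1" if "1 \<le> i" "i \<le> n" for i
  proof -
    have "(i - 1) div 4 \<le> (4 * (q - 2) + 2) div 4"
      using that assms unfolding n_def by (intro div_le_mono) linarith
    also have "\<dots> = q - 2" by simp
    finally have "real ((i - 1) div 4) \<le> real q - 2" using assms by linarith
    then show ?thesis unfolding J_def Q_def by simp
  qed
  have segs: "0 < t i \<and> b i = a i + t i *\<^sub>R (2 * real q - 1, real q) \<and> a i \<in> polyP q \<and> b i \<in> polyP q \<and>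
                 open_segment (a i) (b i) \<subseteq> interior (polyP q)" if "i \<le> n" for i
  proof (cases "i = 0")
    case True
    then have e: "a i = (1 + 1/real q, 0)" "b i = (1 + 1/real q + 1/(real q)^2, 1/(real q * (2*real q - 1)))"
      "t i = 1/((real q)^2 * (2*real q - 1))" unfolding a_def b_def t_def Q_def by simp_all
    show ?thesis using seg0[OF assms] unfolding seg_ok_def e[symmetric] .
  next
    case False
    then have e: "a i = segA (real q) (J i) (R i)" "b i = segB (real q) (J i) (R i)" "t i = segT (real q) (J i) (R i)"
      unfolding a_def b_def t_def Q_def by simp_all
    have "J i \<le> real q - 1" using Jle[of i] that False unfolding Q_def by simp
    then show ?thesis using segall[OF assms JR(1)[of i] _ JR(2)[of i]]
      unfolding seg_ok_def e[symmetric] by blast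
  qed
  have glues: "glued q (b i) (a (Suc i))" if "i < n" for i
  proof (cases "i = 0")
    case True
    have "J 1 = 1" "R 1 = 0" unfolding J_def R_def by simp_all
    then show ?thesis using G0[OF assms] True unfolding a_def b_def Q_def segA_def by simp
  next
    case False
    obtain m r where mr: "i - 1 = 4*m + r" "r < 4" by (metis div_mult_mod_eq mod_less_divisor zero_less_numeral mult.commute)
    have Ji: "J i = real m + 1" "R i = r" unfolding J_def R_def using mr idx[of r m] by auto
    have jle: "J i \<le> Q - 1" using Jle[of i] that False by simp
    show ?thesis
    proof (cases "r = 3")
      case True
      have "Suc i - 1 = 4 * (Suc m) + 0" using mr True False by simp
      then have "J (Suc i) = J i + 1" "R (Suc i) = 0" unfolding J_def R_def using Ji(1) idx[of 0 "Suc m"] by auto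
      then show ?thesis using glue_out[OF assms JR(1)[of i]] jle False True Ji unfolding a_def b_def Q_def by simp
    next
      case r3: False
      have "Suc i - 1 = 4 * m + Suc r" using mr False by simp
      then have "J (Suc i) = J i" "R (Suc i) = Suc r" unfolding J_def R_def using Ji idx[of "Suc r" m] r3 mr(2) by auto
      moreover have "r = 2 \<Longrightarrow> J i \<le> Q - 2"
      proof -
        assume "r = 2"
        then have "4*m + 2 < 4*(q-2) + 2" using mr that False assms unfolding n_def by linarith
        then have "m \<le> q - 3" by linarith
        then have "real m \<le> real q - 3" using \<open>4*m + 2 < 4*(q-2) + 2\<close> assms by linarith
        then show ?thesis using Ji unfolding Q_def by simp
      qed
      ultimately show ?thesis using glue_in[OF assms JR(1)[of i] _ _, of r] jle False Ji r3 mr(2)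
        unfolding a_def b_def Q_def by simp
    qed
  qed
  have bn: "b n \<in> vertices q"
  proof -
    have n1: "n - 1 = 4 * (q - 2) + 2" "n \<noteq> 0" unfolding n_def using assms by auto
    then have "J n = Q - 1" "R n = 2" unfolding J_def R_def Q_def using idx[of 2 "q-2"] assms by auto
    then have "b n = (1, 1/real q)" unfolding b_def segB_def Q_def using n1 by simp
    then show ?thesis using vend by simp
  qed
  have a0: "a 0 = (1 + 1 / real q, 0)" unfolding a_def Q_def by simp
  show ?thesis unfolding saddle_connection_from_def
    apply (rule conjI[OF vstart])
    apply (rule exI[of _ n], rule exI[of _ a], rule exI[of _ b], rule exI[of _ t])
    apply (intro conjI)
    apply (rule a0)
    using segs apply blast
    using glues apply blast
    using bn apply blast
    done
qed
end
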